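(* Let $J:\mathbb{R}_{+}\to\mathbb{R}_{+}$ be continuous with $\int_{\mathbb{Q}_p^n}J(\|x\|_p)\,d^nx=1$, and assume $J(\|x\|_p)$ is of exponential type (with constants $A,B,C_1>0$, $\gamma>-n$). For $t\ge0$ and $x\ne0$ set $$\widetilde{Z}(x,t)=\|x\|_p^{-n}\Big[(1-p^{-n})\sum_{j=0}^{\infty}p^{-nj}e^{(\widehat{J}(p^{-j}\|x\|_p^{-1})-1)t}-e^{(\widehat{J}(p\|x\|_p^{-1})-1)t}\Big].$$ Then: (i) $\widetilde{Z}(x,t)\le 2t\|x\|_p^{-n}$ for all $x\in\mathbb{Q}_p^n\setminus\{0\}$ and $t>0$; (ii) if $-n<\gamma<0$, then for every $l\in\mathbb{Z}$ there is a positive constant $C_0$ (depending on $l$) such that $\widetilde{Z}(x,t)\le C_0t\|x\|_p^{\gamma}e^{-C_1\|x\|_p}$ for all $x$ with $\|x\|_p>p^l$ and all $t>0$.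
   Context: $p$ is a prime, $\|x\|_p=\max_i|x_i|_p$ on $\mathbb{Q}_p^n$, $d^nx$ the Haar measure normalized so that $\mathbb{Z}_p^n$ has measure $1$, $\chi_p$ the standard additive character, and $\widehat{J}(\|\xi\|_p)=\int\chi_p(\xi\cdot x)J(\|x\|_p)\,d^nx$ (a radial real function). $J(\|x\|_p)$ is of exponential type if $A\|x\|_p^{\gamma}e^{-C_1\|x\|_p}\le J(\|x\|_p)\le B\|x\|_p^{\gamma}e^{-C_1\|x\|_p}$ for all $x$, for some positive constants $A,B,C_1$ and real $\gamma>-n$. *)

theory Defs
  imports "HOL-Analysis.Analysis"
begin

text \<open>
  An element of Q_p is represented by its (unique) base-p digit expansion
  x = sum over k of d k * p^k, with digits 0 <= d k < p and d k = 0 for all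
  sufficiently negative k.
\<close>

definition padic :: "nat \<Rightarrow> (int \<Rightarrow> nat) set" where
  "padic p = {d. (\<forall>k. d k < p) \<and> (\<exists>N. \<forall>k<N. d k = 0)}"

definition padic_zero :: "int \<Rightarrow> nat" where
  "padic_zero = (\<lambda>_. 0)"

definition qpn :: "nat \<Rightarrow> nat \<Rightarrow> (nat \<Rightarrow> int \<Rightarrow> nat) set" where
  "qpn p n = {x. (\<forall>i<n. x i \<in> padic p) \<and> (\<forall>i\<ge>n. x i = padic_zero)}"

definition qpn_zero :: "nat \<Rightarrow> int \<Rightarrow> nat" where
  "qpn_zero = (\<lambda>_. padic_zero)"

definition padic_ord :: "(int \<Rightarrow> nat) \<Rightarrow> int" where
  "padic_ord d = (THE v. d v \<noteq> 0 \<and> (\<forall>k<v. d k = 0))"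

definition padic_norm :: "nat \<Rightarrow> (int \<Rightarrow> nat) \<Rightarrow> real" where
  "padic_norm p d = (if d = padic_zero then 0 else real p powr (- real_of_int (padic_ord d)))"

definition qpn_norm :: "nat \<Rightarrow> nat \<Rightarrow> (nat \<Rightarrow> int \<Rightarrow> nat) \<Rightarrow> real" where
  "qpn_norm p n x = Max ((\<lambda>i. padic_norm p (x i)) ` {..<n})"

text \<open>Truncation: the rational number sum of d k * p^k over k < K (a representative of x mod p^K Z_p).\<close>
definition padic_trunc :: "nat \<Rightarrow> (int \<Rightarrow> nat) \<Rightarrow> int \<Rightarrow> real" where
  "padic_trunc p d K = (\<Sum>k\<in>{k. k < K \<and> d k \<noteq> 0}. real (d k) * real p powi k)"

definition real_digit :: "nat \<Rightarrow> real \<Rightarrow> int \<Rightarrow> nat" where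
  "real_digit p q m = nat (\<lfloor>q / real p powi m\<rfloor> mod int p)"

definition ev_val :: "(nat \<Rightarrow> 'a) \<Rightarrow> 'a" where
  "ev_val f = (THE c. eventually (\<lambda>K. f K = c) sequentially)"

text \<open>Field operations of Q_p: the m-th digit of x+y (resp. x*y) is the m-th digit of the sum
  (resp. product) of sufficiently fine truncations.\<close>
definition padic_add :: "nat \<Rightarrow> (int \<Rightarrow> nat) \<Rightarrow> (int \<Rightarrow> nat) \<Rightarrow> (int \<Rightarrow> nat)" where
  "padic_add p x y = (\<lambda>m. ev_val (\<lambda>K. real_digit p (padic_trunc p x (int K) + padic_trunc p y (int K)) m))"

definition padic_mult :: "nat \<Rightarrow> (int \<Rightarrow> nat) \<Rightarrow> (int \<Rightarrow> nat) \<Rightarrow> (int \<Rightarrow> nat)" where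
  "padic_mult p x y = (\<lambda>m. ev_val (\<lambda>K. real_digit p (padic_trunc p x (int K) * padic_trunc p y (int K)) m))"

definition qpn_dot :: "nat \<Rightarrow> nat \<Rightarrow> (nat \<Rightarrow> int \<Rightarrow> nat) \<Rightarrow> (nat \<Rightarrow> int \<Rightarrow> nat) \<Rightarrow> (int \<Rightarrow> nat)" where
  "qpn_dot p n \<xi> x = fold (\<lambda>i acc. padic_add p acc (padic_mult p (\<xi> i) (x i))) [0..<n] padic_zero"

text \<open>Fractional part {y}_p = sum over k<0 of y_k p^k, and the standard additive character
  chi_p(y) = exp(2 pi i {y}_p).\<close>
definition padic_frac :: "nat \<Rightarrow> (int \<Rightarrow> nat) \<Rightarrow> real" where
  "padic_frac p y = padic_trunc p y 0"

definition chi_p :: "nat \<Rightarrow> (int \<Rightarrow> nat) \<Rightarrow> complex" where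
  "chi_p p y = cis (2 * pi * padic_frac p y)"

text \<open>Balls (cylinder sets) a + p^k Z_p^n, of Haar volume p^(-n k).\<close>
definition qpn_ball :: "nat \<Rightarrow> nat \<Rightarrow> (nat \<Rightarrow> int \<Rightarrow> nat) \<Rightarrow> int \<Rightarrow> (nat \<Rightarrow> int \<Rightarrow> nat) set" where
  "qpn_ball p n a k = {x \<in> qpn p n. \<forall>i<n. \<forall>j<k. x i j = a i j}"

definition qpn_balls :: "nat \<Rightarrow> nat \<Rightarrow> (nat \<Rightarrow> int \<Rightarrow> nat) set set" where
  "qpn_balls p n = {qpn_ball p n a k | a k. a \<in> qpn p n}"

definition haar_outer :: "nat \<Rightarrow> nat \<Rightarrow> (nat \<Rightarrow> int \<Rightarrow> nat) set \<Rightarrow> ennreal" where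
  "haar_outer p n S =
     (INF f \<in> {f :: nat \<Rightarrow> (nat \<Rightarrow> int \<Rightarrow> nat) \<times> int.
                 (\<forall>i. fst (f i) \<in> qpn p n) \<and> S \<subseteq> (\<Union>i. qpn_ball p n (fst (f i)) (snd (f i)))}.
        (\<Sum>i. ennreal (real p powr (- real n * real_of_int (snd (f i))))))"

text \<open>Haar measure on Q_p^n on its Borel sigma-algebra (generated by the balls),
  normalised so that Z_p^n has measure 1.\<close>
definition haar :: "nat \<Rightarrow> nat \<Rightarrow> (nat \<Rightarrow> int \<Rightarrow> nat) measure" where
  "haar p n = measure_of (qpn p n) (qpn_balls p n) (haar_outer p n)"

text \<open>Fourier transform of the radial function J(||x||_p), evaluated at ||xi||_p = r
  (it is radial and real-valued).\<close>
definition Jhat :: "nat \<Rightarrow> nat \<Rightarrow> (real \<Rightarrow> real) \<Rightarrow> real \<Rightarrow> real" where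
  "Jhat p n J r =
     (let \<xi> = (SOME \<xi>. \<xi> \<in> qpn p n \<and> qpn_norm p n \<xi> = r) in
      Re (integral\<^sup>L (haar p n) (\<lambda>x. chi_p p (qpn_dot p n \<xi> x) * complex_of_real (J (qpn_norm p n x)))))"

definition Ztilde :: "nat \<Rightarrow> nat \<Rightarrow> (real \<Rightarrow> real) \<Rightarrow> (nat \<Rightarrow> int \<Rightarrow> nat) \<Rightarrow> real \<Rightarrow> real" where
  "Ztilde p n J x t =
     qpn_norm p n x powr (- real n) *
       ((1 - real p powr (- real n)) *
          (\<Sum>j. real p powr (- real n * real j) *
                 exp ((Jhat p n J (real p powr (- real j) * qpn_norm p n x powr (-1)) - 1) * t))
        - exp ((Jhat p n J (real p * qpn_norm p n x powr (-1)) - 1) * t))"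

end

theory Submission
  imports Defs
begin


definition zb :: "(int \<Rightarrow> nat) \<Rightarrow> int \<Rightarrow> bool" where
  "zb d N \<longleftrightarrow> (\<forall>k<N. d k = 0)"

definition agree :: "int \<Rightarrow> (int \<Rightarrow> nat) \<Rightarrow> (int \<Rightarrow> nat) \<Rightarrow> bool" where
  "agree M d d' \<longleftrightarrow> (\<forall>k<M. d k = d' k)"

definition pdiv :: "nat \<Rightarrow> int \<Rightarrow> real \<Rightarrow> bool" where
  "pdiv p M q \<longleftrightarrow> (\<exists>z::int. q = of_int z * real p powi M)"

lemma pdiv_0[simp]: "pdiv p M 0" unfolding pdiv_def by (rule exI[of _ 0]) simp

lemma pdiv_add: "pdiv p M a \<Longrightarrow> pdiv p M b \<Longrightarrow> pdiv p M (a + b)"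
  unfolding pdiv_def by (metis distrib_right of_int_add)

lemma pdiv_diff: "pdiv p M a \<Longrightarrow> pdiv p M b \<Longrightarrow> pdiv p M (a - b)"
  unfolding pdiv_def by (metis left_diff_distrib of_int_diff)

lemma pdiv_mult:
  assumes "p > 0" "pdiv p M a" "pdiv p N b" shows "pdiv p (M + N) (a * b)"
proof -
  obtain z w where "a = of_int z * real p powi M" "b = of_int w * real p powi N"
    using assms unfolding pdiv_def by auto
  then have "a * b = of_int (z * w) * real p powi (M + N)"
    using assms(1) by (simp add: power_int_add)
  then show ?thesis unfolding pdiv_def by blast
qed

lemma pdiv_sum:
  assumes "\<And>k. k \<in> S \<Longrightarrow> pdiv p M (f k)" shows "pdiv p M (sum f S)"
  using assms
proof (induction S rule: infinite_finite_induct)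
  case (insert x F) then show ?case by (simp add: pdiv_add)
qed auto

lemma pdiv_term:
  assumes "p > 0" "M \<le> k" shows "pdiv p M (of_int c * real p powi k)"
proof -
  have "real p powi k = real p powi (k - M) * real p powi M"
    using assms by (simp add: power_int_add[symmetric])
  also have "real p powi (k - M) = real (p ^ nat (k - M))"
    using assms by (metis le_diff_eq diff_ge_0_iff_ge int_nat_eq of_nat_power power_int_of_nat add.commute)
  finally have "of_int c * real p powi k = of_int (c * int (p ^ nat (k - M))) * real p powi M"
    by simp
  then show ?thesis unfolding pdiv_def by blast
qed

lemma digit_eq:
  assumes p: "p \<ge> 2" and d: "pdiv p M (q - q')" and m: "m < M"
  shows "real_digit p q m = real_digit p q' m"
proof -
  obtain z where z: "q - q' = of_int z * real p powi M" using d pdiv_def by auto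
  have pm: "real p powi M = real p ^ nat (M - m) * real p powi m"
    using p m by (simp add: power_int_add[symmetric] power_int_of_nat[symmetric])
  have pp: "real p powi m \<noteq> 0" using p by simp
  have "q / real p powi m = q' / real p powi m + of_int (z * int p ^ nat (M - m))"
    using z pp by (simp add: pm field_simps)
  then have fl: "\<lfloor>q / real p powi m\<rfloor> = \<lfloor>q' / real p powi m\<rfloor> + z * int p ^ nat (M - m)"
    using floor_add_int[of "q' / real p powi m" "z * int p ^ nat (M - m)"] by simp
  have e: "int p ^ nat (M - m) = int p ^ (nat (M - m) - 1) * int p"
    using m by (metis Suc_pred' power_Suc2 zero_less_nat_eq diff_gt_0_iff_gt)
  have "(\<lfloor>q' / real p powi m\<rfloor> + z * int p ^ nat (M - m)) mod int p
       = \<lfloor>q' / real p powi m\<rfloor> mod int p"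
    unfolding e by (metis mod_mult_self1 mult.assoc)
  then show ?thesis unfolding real_digit_def fl by simp
qed

lemma digit_zero:
  assumes "p \<ge> 2" "pdiv p M q" "m < M" shows "real_digit p q m = 0"
proof -
  have "real_digit p q m = real_digit p 0 m" using digit_eq[of p M q 0 m] assms by simp
  also have "\<dots> = 0" by (simp add: real_digit_def)
  finally show ?thesis .
qed

lemma trunc_eq:
  assumes "zb d N" shows "padic_trunc p d K = (\<Sum>k\<in>{N..<K}. real (d k) * real p powi k)"
  unfolding padic_trunc_def
proof (rule sum.mono_neutral_left)
  show "{k. k < K \<and> d k \<noteq> 0} \<subseteq> {N..<K}" using assms unfolding zb_def by (auto simp: not_less[symmetric])
qed auto

lemma trunc_pdiv:
  assumes "p > 0" "zb d N" shows "pdiv p N (padic_trunc p d K)"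
  unfolding trunc_eq[OF assms(2)]
  by (rule pdiv_sum) (use pdiv_term[OF assms(1), of N _ "int (d _)"] in auto)

lemma trunc_diff_pdiv:
  assumes "p > 0" "zb d N" "zb d' N" "agree M d d'"
  shows "pdiv p M (padic_trunc p d K - padic_trunc p d' K)"
proof -
  have "padic_trunc p d K - padic_trunc p d' K =
        (\<Sum>k\<in>{N..<K}. of_int (int (d k) - int (d' k)) * real p powi k)"
    unfolding trunc_eq[OF assms(2)] trunc_eq[OF assms(3)] sum_subtractf[symmetric]
    by (simp add: algebra_simps)
  also have "pdiv p M \<dots>"
  proof (rule pdiv_sum)
    fix k assume "k \<in> {N..<K}"
    show "pdiv p M (of_int (int (d k) - int (d' k)) * real p powi k)"
    proof (cases "k < M")
      case True then show ?thesis using assms(4) unfolding agree_def by simp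
    next
      case False then show ?thesis using pdiv_term[OF assms(1), of M k "int (d k) - int (d' k)"] by simp
    qed
  qed
  finally show ?thesis .
qed

lemma ev_val_cong:
  assumes "eventually (\<lambda>K. f K = g K) sequentially" shows "ev_val f = ev_val g"
proof -
  have "(\<lambda>c. eventually (\<lambda>K. f K = c) sequentially) = (\<lambda>c. eventually (\<lambda>K. g K = c) sequentially)"
  proof
    fix c show "eventually (\<lambda>K. f K = c) sequentially = eventually (\<lambda>K. g K = c) sequentially"
      using assms by (auto elim: eventually_elim2)
  qed
  then show ?thesis unfolding ev_val_def by simp
qed

lemma ev_val_const:
  assumes "\<And>K. f K = c" shows "ev_val f = c"
  unfolding ev_val_def
proof (rule the_equality)
  show "eventually (\<lambda>K. f K = c) sequentially" using assms by simp
  fix c' assume "eventually (\<lambda>K. f K = c') sequentially"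
  then obtain N where "\<And>K. K \<ge> N \<Longrightarrow> f K = c'" by (auto simp: eventually_sequentially)
  then show "c' = c" using assms[of N] by simp
qed

lemma add_zb:
  assumes "p \<ge> 2" "zb x N" "zb y N" shows "zb (padic_add p x y) N"
  unfolding zb_def padic_add_def
proof (intro allI impI ev_val_const)
  fix k K assume "k < N"
  have "pdiv p N (padic_trunc p x (int K) + padic_trunc p y (int K))"
    using assms by (intro pdiv_add trunc_pdiv) auto
  then show "real_digit p (padic_trunc p x (int K) + padic_trunc p y (int K)) k = 0"
    using digit_zero assms(1) \<open>k < N\<close> by blast
qed

lemma add_agree:
  assumes "p \<ge> 2" "zb x N" "zb y N" "zb x' N" "zb y' N" "agree M x x'" "agree M y y'"
  shows "agree M (padic_add p x y) (padic_add p x' y')"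
  unfolding agree_def padic_add_def
proof (intro allI impI ev_val_cong always_eventually)
  fix k K assume "k < M"
  have "pdiv p M ((padic_trunc p x (int K) + padic_trunc p y (int K)) -
                  (padic_trunc p x' (int K) + padic_trunc p y' (int K)))"
    using pdiv_add[OF trunc_diff_pdiv[of p x N x' M "int K"] trunc_diff_pdiv[of p y N y' M "int K"]] assms
    by (simp add: algebra_simps)
  then show "real_digit p (padic_trunc p x (int K) + padic_trunc p y (int K)) k =
             real_digit p (padic_trunc p x' (int K) + padic_trunc p y' (int K)) k"
    using digit_eq assms(1) \<open>k < M\<close> by blast
qed

lemma mult_zb:
  assumes "p \<ge> 2" "zb x N1" "zb y N2" shows "zb (padic_mult p x y) (N1 + N2)"
  unfolding zb_def padic_mult_def
proof (intro allI impI ev_val_const)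
  fix k K assume "k < N1 + N2"
  have "pdiv p (N1 + N2) (padic_trunc p x (int K) * padic_trunc p y (int K))"
    using assms by (intro pdiv_mult trunc_pdiv) auto
  then show "real_digit p (padic_trunc p x (int K) * padic_trunc p y (int K)) k = 0"
    using digit_zero assms(1) \<open>k < N1 + N2\<close> by blast
qed

lemma mult_agree:
  assumes "p \<ge> 2" "zb x N1" "zb y N" "zb y' N" "agree M y y'"
  shows "agree (N1 + M) (padic_mult p x y) (padic_mult p x y')"
  unfolding agree_def padic_mult_def
proof (intro allI impI ev_val_cong always_eventually)
  fix k K assume "k < N1 + M"
  have "pdiv p (N1 + M) (padic_trunc p x (int K) * (padic_trunc p y (int K) - padic_trunc p y' (int K)))"
    using assms by (intro pdiv_mult trunc_pdiv trunc_diff_pdiv) auto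
  then show "real_digit p (padic_trunc p x (int K) * padic_trunc p y (int K)) k =
             real_digit p (padic_trunc p x (int K) * padic_trunc p y' (int K)) k"
    using digit_eq assms(1) \<open>k < N1 + M\<close> by (simp add: algebra_simps)
qed

lemma fold_add_agree:
  assumes "p \<ge> 2"
    and "\<And>i. i \<in> set xs \<Longrightarrow> zb (F i) N \<and> zb (G i) N \<and> agree M (F i) (G i)"
    and "zb a N" "zb b N" "agree M a b"
  shows "zb (fold (\<lambda>i acc. padic_add p acc (F i)) xs a) N \<and>
         zb (fold (\<lambda>i acc. padic_add p acc (G i)) xs b) N \<and>
         agree M (fold (\<lambda>i acc. padic_add p acc (F i)) xs a) (fold (\<lambda>i acc. padic_add p acc (G i)) xs b)"
  using assms(2-)
proof (induction xs arbitrary: a b)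
  case Nil then show ?case by simp
next
  case (Cons i xs)
  have h: "zb (F i) N" "zb (G i) N" "agree M (F i) (G i)" using Cons.prems(1) by auto
  show ?case
    using Cons.IH[of "padic_add p a (F i)" "padic_add p b (G i)"] Cons.prems h
      add_zb[OF assms(1)] add_agree[OF assms(1)]
    by simp
qed


lemma zb_mono: "zb d N \<Longrightarrow> N' \<le> N \<Longrightarrow> zb d N'"
  unfolding zb_def by auto

lemma zb_zero[simp]: "zb padic_zero N"
  unfolding zb_def padic_zero_def by simp

lemma padic_zb: "d \<in> padic p \<Longrightarrow> \<exists>N. zb d N"
  unfolding padic_def zb_def by auto

lemma common_zb:
  fixes n :: nat
  assumes "\<And>i. i < n \<Longrightarrow> \<exists>N. zb (f i) N" shows "\<exists>N. \<forall>i<n. zb (f i) N"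
  using assms
proof (induction n)
  case 0 then show ?case by simp
next
  case (Suc n)
  obtain N where N: "\<forall>i<n. zb (f i) N" using Suc by auto
  obtain N' where N': "zb (f n) N'" using Suc.prems by auto
  have "\<forall>i<Suc n. zb (f i) (min N N')"
    using N N' zb_mono by (metis less_Suc_eq min.cobounded1 min.cobounded2)
  then show ?case by blast
qed

lemma padic_ord_prop:
  assumes "d \<in> padic p" "d \<noteq> padic_zero"
  shows "d (padic_ord d) \<noteq> 0 \<and> zb d (padic_ord d)"
proof -
  obtain N where N: "\<forall>k<N. d k = 0" using assms(1) unfolding padic_def by auto
  obtain k0 where k0: "d k0 \<noteq> 0" using assms(2) unfolding padic_zero_def by auto
  have k0N: "k0 \<ge> N" using N k0 by (meson not_le)
  have ex: "\<exists>j::nat. d (N + int j) \<noteq> 0"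
    using k0 k0N by (intro exI[of _ "nat (k0 - N)"]) simp
  define j where "j = (LEAST j::nat. d (N + int j) \<noteq> 0)"
  define v where "v = N + int j"
  have dv: "d v \<noteq> 0" unfolding v_def j_def using LeastI_ex[OF ex] .
  have zv: "\<forall>k<v. d k = 0"
  proof (intro allI impI)
    fix k assume "k < v"
    show "d k = 0"
    proof (cases "k < N")
      case True then show ?thesis using N by simp
    next
      case False
      then have "nat (k - N) < j" using \<open>k < v\<close> v_def by auto
      then have "\<not> d (N + int (nat (k - N))) \<noteq> 0" unfolding j_def by (rule not_less_Least)
      then show ?thesis using False by simp
    qed
  qed
  have "padic_ord d = v"
    unfolding padic_ord_def
  proof (rule the_equality)
    show "d v \<noteq> 0 \<and> (\<forall>k<v. d k = 0)" using dv zv by simp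
    fix w assume w: "d w \<noteq> 0 \<and> (\<forall>k<w. d k = 0)"
    show "w = v"
    proof (rule ccontr)
      assume "w \<noteq> v"
      then show False using w dv zv by (cases "w < v") auto
    qed
  qed
  then show ?thesis using dv zv unfolding zb_def by simp
qed

lemma padic_norm_nz:
  "d \<noteq> padic_zero \<Longrightarrow> padic_norm p d = real p powr (- real_of_int (padic_ord d))"
  unfolding padic_norm_def by simp

lemma padic_norm_nonneg: "padic_norm p d \<ge> 0"
  unfolding padic_norm_def by simp

lemma qpn_norm_ge:
  assumes "i < n" shows "padic_norm p (x i) \<le> qpn_norm p n x"
  unfolding qpn_norm_def using assms by (intro Max_ge) auto

lemma qpn_norm_attained:
  assumes "n \<ge> 1" shows "\<exists>i<n. qpn_norm p n x = padic_norm p (x i)"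
proof -
  have "qpn_norm p n x \<in> (\<lambda>i. padic_norm p (x i)) ` {..<n}"
    unfolding qpn_norm_def using assms by (intro Max_in) (auto simp: lessThan_empty_iff)
  then show ?thesis by auto
qed

lemma qpn_norm_nonneg: "n \<ge> 1 \<Longrightarrow> qpn_norm p n x \<ge> 0"
  using qpn_norm_ge[of 0 n p x] padic_norm_nonneg[of p "x 0"] by simp

lemma qpn_zero_norm: "n \<ge> 1 \<Longrightarrow> qpn_norm p n qpn_zero = 0"
  using qpn_norm_attained[of n p qpn_zero] unfolding qpn_zero_def padic_norm_def by auto

lemma qpn_zero_in: "p > 0 \<Longrightarrow> qpn_zero \<in> qpn p n"
  unfolding qpn_def qpn_zero_def padic_def padic_zero_def by auto

lemma qpn_nz_comp:
  assumes "x \<in> qpn p n" "x \<noteq> qpn_zero" shows "\<exists>i<n. x i \<noteq> padic_zero"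
proof (rule ccontr)
  assume nz: "\<not> ?thesis"
  have "x = qpn_zero"
  proof
    fix i show "x i = qpn_zero i"
    proof (cases "i < n")
      case True then show ?thesis using nz unfolding qpn_zero_def by auto
    next
      case False then show ?thesis using assms(1) unfolding qpn_def qpn_zero_def by auto
    qed
  qed
  then show False using assms(2) by simp
qed

lemma qpn_norm_pow:
  assumes p: "p \<ge> 2" and n: "n \<ge> 1" and x: "x \<in> qpn p n" "x \<noteq> qpn_zero"
  shows "\<exists>v::int. qpn_norm p n x = real p powr real_of_int v"
proof -
  obtain i where i: "i < n" "x i \<noteq> padic_zero" using qpn_nz_comp[OF x] by auto
  have "0 < padic_norm p (x i)" using i p by (simp add: padic_norm_nz)
  also have "\<dots> \<le> qpn_norm p n x" using qpn_norm_ge i by blast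
  finally have pos: "qpn_norm p n x > 0" .
  obtain j where j: "j < n" "qpn_norm p n x = padic_norm p (x j)" using qpn_norm_attained n by blast
  then have "x j \<noteq> padic_zero" using pos unfolding padic_norm_def by auto
  then show ?thesis using j by (intro exI[of _ "- padic_ord (x j)"]) (simp add: padic_norm_nz)
qed

lemma qpn_norm_pos:
  assumes p: "p \<ge> 2" and n: "n \<ge> 1" and x: "x \<in> qpn p n" "x \<noteq> qpn_zero"
  shows "qpn_norm p n x > 0"
  using qpn_norm_pow[OF assms] p by auto

lemma qpn_comp_padic: "x \<in> qpn p n \<Longrightarrow> i < n \<Longrightarrow> x i \<in> padic p"
  unfolding qpn_def by auto

lemma comp_zb_norm:
  assumes p: "p \<ge> 2" and x: "x \<in> qpn p n" and i: "i < n" and xi: "x i \<noteq> padic_zero"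
  shows "zb (x i) (padic_ord (x i)) \<and> real p powr (- real_of_int (padic_ord (x i))) \<le> qpn_norm p n x"
  using padic_ord_prop[OF qpn_comp_padic[OF x i] xi] qpn_norm_ge[OF i, of p x] padic_norm_nz[OF xi, of p]
  by simp

lemma mult_zb0:
  assumes p: "p \<ge> 2" and x: "\<xi> \<in> qpn p n" and y: "y \<in> qpn p n" and i: "i < n"
    and le: "qpn_norm p n \<xi> * qpn_norm p n y \<le> 1"
  shows "zb (padic_mult p (\<xi> i) (y i)) 0"
proof (cases "\<xi> i = padic_zero")
  case True
  obtain N where "zb (y i) N" using padic_zb qpn_comp_padic[OF y i] by blast
  then show ?thesis using mult_zb[OF p, of "\<xi> i" "-N" "y i" N] True by simp
next
  case F1: False
  show ?thesis
  proof (cases "y i = padic_zero")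
    case True
    obtain N where "zb (\<xi> i) N" using padic_zb qpn_comp_padic[OF x i] by blast
    then show ?thesis using mult_zb[OF p, of "\<xi> i" N "y i" "-N"] True by simp
  next
    case F2: False
    define o1 where "o1 = padic_ord (\<xi> i)"
    define o2 where "o2 = padic_ord (y i)"
    have h1: "zb (\<xi> i) o1" "real p powr (- real_of_int o1) \<le> qpn_norm p n \<xi>"
      using comp_zb_norm[OF p x i F1] unfolding o1_def by auto
    have h2: "zb (y i) o2" "real p powr (- real_of_int o2) \<le> qpn_norm p n y"
      using comp_zb_norm[OF p y i F2] unfolding o2_def by auto
    have "real p powr (- real_of_int o1) * real p powr (- real_of_int o2) \<le> qpn_norm p n \<xi> * qpn_norm p n y"
      by (rule mult_mono) (use h1 h2 order_trans[OF powr_ge_zero h1(2)] in auto)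
    then have "real p powr (- real_of_int (o1 + o2)) \<le> real p powr 0"
      using le by (simp add: powr_add[symmetric])
    then have "- real_of_int (o1 + o2) \<le> 0" using p by (subst (asm) powr_le_cancel_iff) auto
    then have "o1 + o2 \<ge> 0" by simp
    then show ?thesis using mult_zb[OF p h1(1) h2(1)] zb_mono by blast
  qed
qed

lemma frac_zero: "zb d 0 \<Longrightarrow> padic_frac p d = 0"
  unfolding padic_frac_def padic_trunc_def zb_def by simp

lemma chi_one:
  assumes p: "p \<ge> 2" and x: "\<xi> \<in> qpn p n" and y: "y \<in> qpn p n"
    and le: "qpn_norm p n \<xi> * qpn_norm p n y \<le> 1"
  shows "chi_p p (qpn_dot p n \<xi> y) = 1"
proof -
  have "zb (qpn_dot p n \<xi> y) 0"
    unfolding qpn_dot_def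
    using fold_add_agree[OF p, of "[0..<n]" "\<lambda>i. padic_mult p (\<xi> i) (y i)" 0
        "\<lambda>i. padic_mult p (\<xi> i) (y i)" 0 padic_zero padic_zero]
      mult_zb0[OF p x y _ le]
    by (simp add: agree_def)
  then show ?thesis unfolding chi_p_def by (simp add: frac_zero)
qed

lemma chi_local:
  assumes p: "p \<ge> 2" and x: "\<xi> \<in> qpn p n"
  shows "\<exists>M. \<forall>y y'. y \<in> qpn p n \<longrightarrow> y' \<in> qpn p n \<longrightarrow> (\<forall>i<n. agree M (y i) (y' i)) \<longrightarrow>
            chi_p p (qpn_dot p n \<xi> y) = chi_p p (qpn_dot p n \<xi> y')"
proof -
  obtain N1 where N1: "\<forall>i<n. zb (\<xi> i) N1"
    using common_zb[of n \<xi>] padic_zb qpn_comp_padic[OF x] by blast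
  have "\<forall>y y'. y \<in> qpn p n \<longrightarrow> y' \<in> qpn p n \<longrightarrow> (\<forall>i<n. agree (-N1) (y i) (y' i)) \<longrightarrow>
            chi_p p (qpn_dot p n \<xi> y) = chi_p p (qpn_dot p n \<xi> y')"
  proof (intro allI impI)
    fix y y' assume y: "y \<in> qpn p n" and y': "y' \<in> qpn p n" and ag: "\<forall>i<n. agree (-N1) (y i) (y' i)"
    obtain N2 where N2: "\<forall>i<n. zb (y i) N2 \<and> zb (y' i) N2"
    proof -
      obtain a where a: "\<forall>i<n. zb (y i) a" using common_zb[of n y] padic_zb qpn_comp_padic[OF y] by blast
      obtain b where b: "\<forall>i<n. zb (y' i) b" using common_zb[of n y'] padic_zb qpn_comp_padic[OF y'] by blast
      have "\<forall>i<n. zb (y i) (min a b) \<and> zb (y' i) (min a b)" using a b zb_mono by (meson min.cobounded1 min.cobounded2)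
      then show ?thesis using that by blast
    qed
    have prods: "\<And>i. i \<in> set [0..<n] \<Longrightarrow>
       zb (padic_mult p (\<xi> i) (y i)) (N1 + N2) \<and> zb (padic_mult p (\<xi> i) (y' i)) (N1 + N2) \<and>
       agree 0 (padic_mult p (\<xi> i) (y i)) (padic_mult p (\<xi> i) (y' i))"
    proof -
      fix i assume "i \<in> set [0..<n]"
      then have i: "i < n" by simp
      show "?thesis i"
        using mult_zb[OF p, of "\<xi> i" N1 _ N2] mult_agree[OF p, of "\<xi> i" N1 "y i" N2 "y' i" "-N1"]
          N1 N2 ag i by simp
    qed
    have "agree 0 (qpn_dot p n \<xi> y) (qpn_dot p n \<xi> y')"
      unfolding qpn_dot_def
      using fold_add_agree[OF p, of "[0..<n]" "\<lambda>i. padic_mult p (\<xi> i) (y i)" "N1 + N2"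
          "\<lambda>i. padic_mult p (\<xi> i) (y' i)" 0 padic_zero padic_zero] prods
      by (simp add: agree_def)
    then have "padic_frac p (qpn_dot p n \<xi> y) = padic_frac p (qpn_dot p n \<xi> y')"
      unfolding padic_frac_def padic_trunc_def agree_def
      by (intro sum.cong) auto
    then show "chi_p p (qpn_dot p n \<xi> y) = chi_p p (qpn_dot p n \<xi> y')"
      unfolding chi_p_def by simp
  qed
  then show ?thesis by blast
qed


lemma balls_Pow: "qpn_balls p n \<subseteq> Pow (qpn p n)"
  unfolding qpn_balls_def qpn_ball_def by auto

lemma sets_haar: "sets (haar p n) = sigma_sets (qpn p n) (qpn_balls p n)"
  unfolding haar_def by (rule sets_measure_of[OF balls_Pow])

lemma space_haar: "space (haar p n) = qpn p n"
  unfolding haar_def by (rule space_measure_of[OF balls_Pow])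

lemma ball_sets: "a \<in> qpn p n \<Longrightarrow> qpn_ball p n a k \<in> sets (haar p n)"
  unfolding sets_haar qpn_balls_def by (intro sigma_sets.Basic) blast

lemma emeasure_haar_le: "emeasure (haar p n) S \<le> haar_outer p n S"
  unfolding haar_def emeasure_measure_of_conv by simp

lemma outer_ball_le:
  assumes p: "p \<ge> 2" and n: "n \<ge> 1" and a: "a \<in> qpn p n"
  shows "haar_outer p n (qpn_ball p n a k) \<le>
         ennreal (real p powr (- real n * real_of_int k) / (1 - real p powr (- real n)))"
proof -
  define q where "q = real p powr (- real n)"
  have q: "0 \<le> q" "q < 1" unfolding q_def using p n by (auto intro!: powr_less_one)
  define f where "f = (\<lambda>i::nat. (a, k + int i))"
  have "haar_outer p n (qpn_ball p n a k) \<le>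
        (\<Sum>i. ennreal (real p powr (- real n * real_of_int (snd (f i)))))"
    unfolding haar_outer_def
  proof (rule INF_lower)
    have "qpn_ball p n a k \<subseteq> qpn_ball p n (fst (f 0)) (snd (f 0))" unfolding f_def by simp
    then show "f \<in> {f. (\<forall>i. fst (f i) \<in> qpn p n) \<and> qpn_ball p n a k \<subseteq> (\<Union>i. qpn_ball p n (fst (f i)) (snd (f i)))}"
      using a by (auto simp: f_def) (metis add.right_neutral of_nat_0)
  qed
  also have "(\<Sum>i. ennreal (real p powr (- real n * real_of_int (snd (f i))))) =
             (\<Sum>i. ennreal (real p powr (- real n * real_of_int k) * q ^ i))"
  proof (rule arg_cong[where f=suminf], rule ext)
    fix i :: nat
    have "real p powr (- real n * real_of_int k) * q ^ i = real p powr (- real n * real_of_int k) * real p powr (- real n * real i)"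
      unfolding q_def using p by (simp add: powr_realpow[symmetric] powr_powr)
    also have "\<dots> = real p powr (- real n * real_of_int (snd (f i)))"
      unfolding f_def by (simp add: powr_add[symmetric] algebra_simps)
    finally show "ennreal (real p powr (- real n * real_of_int (snd (f i)))) = ennreal (real p powr (- real n * real_of_int k) * q ^ i)" by simp
  qed
  also have "(\<Sum>i. ennreal (real p powr (- real n * real_of_int k) * q ^ i)) =
        ennreal (\<Sum>i. real p powr (- real n * real_of_int k) * q ^ i)"
    using q by (intro suminf_ennreal2) (auto intro!: summable_mult summable_geometric)
  also have "(\<Sum>i. real p powr (- real n * real_of_int k) * q ^ i) =
             real p powr (- real n * real_of_int k) / (1 - q)"
    using q by (simp add: suminf_mult suminf_geometric divide_simps)
  finally show ?thesis unfolding q_def .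
qed

lemma emeasure_ball_le:
  assumes p: "p \<ge> 2" and n: "n \<ge> 1" and a: "a \<in> qpn p n"
  shows "emeasure (haar p n) (qpn_ball p n a k) \<le>
         ennreal (real p powr (- real n * real_of_int k) / (1 - real p powr (- real n)))"
  using emeasure_haar_le outer_ball_le[OF assms] order_trans by blast

lemma zero_INT: "p > 0 \<Longrightarrow> {qpn_zero} = (\<Inter>m::nat. qpn_ball p n qpn_zero (int m))"
proof (intro equalityI subsetI)
  fix x assume "p > 0" "x \<in> {qpn_zero}" then show "x \<in> (\<Inter>m::nat. qpn_ball p n qpn_zero (int m))"
    using qpn_zero_in unfolding qpn_ball_def by auto
next
  fix x assume x: "x \<in> (\<Inter>m::nat. qpn_ball p n qpn_zero (int m))"
  then have xq: "x \<in> qpn p n" unfolding qpn_ball_def by auto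
  have "x = qpn_zero"
  proof (intro ext)
    fix i j show "x i j = qpn_zero i j"
    proof (cases "i < n")
      case True
      have "x \<in> qpn_ball p n qpn_zero (int (nat (j + 1)))" using x by blast
      then show ?thesis using True unfolding qpn_ball_def by auto
    next
      case False then show ?thesis using xq unfolding qpn_def qpn_zero_def by auto
    qed
  qed
  then show "x \<in> {qpn_zero}" by simp
qed

lemma zero_sets: "p > 0 \<Longrightarrow> {qpn_zero} \<in> sets (haar p n)"
  by (subst zero_INT[of p n], assumption) (intro sets.countable_INT ball_sets qpn_zero_in; auto intro: ball_sets qpn_zero_in)

lemma zero_null:
  assumes p: "p \<ge> 2" and n: "n \<ge> 1"
  shows "emeasure (haar p n) {qpn_zero} = 0"
proof -
  define q where "q = real p powr (- real n)"
  have q: "0 \<le> q" "q < 1" unfolding q_def using p n by (auto intro!: powr_less_one)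
  have le: "emeasure (haar p n) {qpn_zero} \<le> ennreal (q ^ m / (1 - q))" for m :: nat
  proof -
    have "emeasure (haar p n) {qpn_zero} \<le> emeasure (haar p n) (qpn_ball p n qpn_zero (int m))"
      using zero_INT[of p n] p by (intro emeasure_mono ball_sets qpn_zero_in) auto
    also have "\<dots> \<le> ennreal (real p powr (- real n * real_of_int (int m)) / (1 - q))"
      unfolding q_def using emeasure_ball_le[OF p n qpn_zero_in, of "int m"] p by force
    also have "real p powr (- real n * real_of_int (int m)) = q ^ m"
      unfolding q_def using p by (simp add: powr_realpow[symmetric] powr_powr)
    finally show ?thesis .
  qed
  have eps: "emeasure (haar p n) {qpn_zero} \<le> 0 + ennreal e" if e: "e > 0" for e
  proof -
    obtain m where "q ^ m < e * (1 - q)" using real_arch_pow_inv[of "e * (1 - q)" q] q e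
      by (cases "q = 0") (auto intro: exI[of _ 1])
    then have "q ^ m / (1 - q) \<le> e" using q by (simp add: divide_simps)
    then have "ennreal (q ^ m / (1 - q)) \<le> ennreal e" by (rule ennreal_leI)
    then show ?thesis using order_trans[OF le[of m]] by simp
  qed
  have "emeasure (haar p n) {qpn_zero} \<le> 0"
  proof (rule ennreal_le_epsilon)
    fix e :: real assume "0 < e" then show "emeasure (haar p n) {qpn_zero} \<le> 0 + ennreal e" by (rule eps)
  qed
  then show ?thesis by simp
qed

definition tv :: "nat \<Rightarrow> int \<Rightarrow> (nat \<Rightarrow> int \<Rightarrow> nat) \<Rightarrow> (nat \<Rightarrow> int \<Rightarrow> nat)" where
  "tv n M y = (\<lambda>i j. if i < n \<and> j < M then y i j else 0)"

lemma tv_qpn: assumes "p > 0" "y \<in> qpn p n" shows "tv n M y \<in> qpn p n"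
proof -
  have h: "\<And>i. i < n \<Longrightarrow> \<exists>N. \<forall>k<N. y i k = 0" using assms(2) unfolding qpn_def padic_def by auto
  have h2: "\<And>i. i < n \<Longrightarrow> \<exists>N. \<forall>k<M. k < N \<longrightarrow> y i k = 0" using h by blast
  then show ?thesis using assms unfolding qpn_def tv_def padic_def padic_zero_def
    by (auto simp: fun_eq_iff)
qed

lemma tv_ball: "y \<in> qpn p n \<Longrightarrow> y \<in> qpn_ball p n (tv n M y) M"
  unfolding qpn_ball_def tv_def by auto

lemma tv_countable:
  assumes "p > 0" shows "countable (tv n M ` qpn p n)"
proof -
  define F where "F = (\<lambda>L::nat. (\<lambda>h i j. if i < n \<and> - int L \<le> j \<and> j < M then h (i, j) else 0) `
          (PiE ({..<n} \<times> {- int L..<M}) (\<lambda>_. {..<p})))"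
  have "tv n M ` qpn p n \<subseteq> (\<Union>L. F L)"
  proof
    fix a assume "a \<in> tv n M ` qpn p n"
    then obtain y where y: "y \<in> qpn p n" "a = tv n M y" by auto
    obtain N where N: "\<forall>i<n. zb (y i) N" using common_zb[of n y] padic_zb qpn_comp_padic[OF y(1)] by blast
    define L where "L = nat (- N)"
    have LN: "- int L \<le> N" unfolding L_def by simp
    have NL: "\<forall>i<n. zb (y i) (- int L)" using N zb_mono[OF _ LN] by blast
    define h where "h = restrict (\<lambda>(i, j). y i j) ({..<n} \<times> {- int L..<M})"
    have hP: "h \<in> PiE ({..<n} \<times> {- int L..<M}) (\<lambda>_. {..<p})"
      unfolding h_def using y(1) unfolding qpn_def padic_def by auto
    have "a = (\<lambda>i j. if i < n \<and> - int L \<le> j \<and> j < M then h (i, j) else 0)"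
    proof (intro ext)
      fix i j
      show "a i j = (if i < n \<and> - int L \<le> j \<and> j < M then h (i, j) else 0)"
      proof (cases "i < n \<and> j < M")
        case True
        show ?thesis
        proof (cases "- int L \<le> j")
          case True then show ?thesis using \<open>i < n \<and> j < M\<close> unfolding y(2) tv_def h_def by simp
        next
          case False then show ?thesis using \<open>i < n \<and> j < M\<close> NL unfolding y(2) tv_def zb_def by simp
        qed
      next
        case False then show ?thesis unfolding y(2) tv_def by auto
      qed
    qed
    then show "a \<in> (\<Union>L. F L)" unfolding F_def using hP by blast
  qed
  moreover have "countable (\<Union>L. F L)"
  proof (rule countable_UN)
    fix L :: nat
    have "finite (PiE ({..<n} \<times> {- int L..<M}) (\<lambda>_. {..<p}))" by (intro finite_PiE) auto
    then show "countable (F L)" unfolding F_def by (intro countable_finite finite_imageI)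
  qed simp
  ultimately show ?thesis by (rule countable_subset)
qed

lemma chi_measurable:
  assumes p: "p \<ge> 2" and x: "\<xi> \<in> qpn p n"
  shows "(\<lambda>y. chi_p p (qpn_dot p n \<xi> y)) \<in> borel_measurable (haar p n)"
proof -
  obtain M where M: "\<forall>y y'. y \<in> qpn p n \<longrightarrow> y' \<in> qpn p n \<longrightarrow> (\<forall>i<n. agree M (y i) (y' i)) \<longrightarrow>
            chi_p p (qpn_dot p n \<xi> y) = chi_p p (qpn_dot p n \<xi> y')"
    using chi_local[OF p x] by blast
  let ?f = "\<lambda>y. chi_p p (qpn_dot p n \<xi> y)"
  show ?thesis
  proof (rule borel_measurableI)
    fix S :: "complex set"
    let ?R = "{a \<in> tv n M ` qpn p n. ?f a \<in> S}"
    have eq: "?f -` S \<inter> space (haar p n) = \<Union> ((\<lambda>a. qpn_ball p n a M) ` ?R)"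
    proof (intro equalityI subsetI)
      fix y assume "y \<in> ?f -` S \<inter> space (haar p n)"
      then have y: "y \<in> qpn p n" "?f y \<in> S" by (auto simp: space_haar)
      have ag: "\<forall>i<n. agree M (tv n M y i) (y i)" by (simp add: agree_def tv_def)
      have tq: "tv n M y \<in> qpn p n" using tv_qpn[OF _ y(1)] p by simp
      have "?f (tv n M y) = ?f y"
        using M tq y(1) ag by blast
      then show "y \<in> \<Union> ((\<lambda>a. qpn_ball p n a M) ` ?R)"
        using y tv_ball[OF y(1), of M] by (intro UnionI[of "qpn_ball p n (tv n M y) M"]) auto
    next
      fix y assume "y \<in> \<Union> ((\<lambda>a. qpn_ball p n a M) ` ?R)"
      then obtain a where a: "a \<in> ?R" "y \<in> qpn_ball p n a M" by auto
      have aq: "a \<in> qpn p n" using a(1) tv_qpn p by auto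
      have yq: "y \<in> qpn p n" using a(2) unfolding qpn_ball_def by auto
      have ag: "\<forall>i<n. agree M (y i) (a i)" using a(2) unfolding qpn_ball_def agree_def by auto
      have "?f y = ?f a" using M aq yq ag by blast
      then show "y \<in> ?f -` S \<inter> space (haar p n)" using a yq by (auto simp: space_haar)
    qed
    have "countable ?R" using tv_countable[of p n M] p by (auto intro: countable_subset)
    moreover have "(\<lambda>a. qpn_ball p n a M) ` ?R \<subseteq> sets (haar p n)"
      using tv_qpn p by (auto intro!: ball_sets)
    ultimately show "?f -` S \<inter> space (haar p n) \<in> sets (haar p n)"
      unfolding eq by (intro sets.countable_Union) auto
  qed
qed


lemma AE_nz:
  assumes p: "p \<ge> 2" and n: "n \<ge> 1"
  shows "AE y in haar p n. y \<noteq> qpn_zero"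
proof (rule AE_I')
  show "{qpn_zero} \<in> null_sets (haar p n)"
    using zero_null[OF p n] zero_sets[of p n] p by (intro null_setsI) auto
qed auto

lemma g_meas:
  assumes "integrable (haar p n) (\<lambda>x. J (qpn_norm p n x))"
  shows "(\<lambda>x. complex_of_real (J (qpn_norm p n x))) \<in> borel_measurable (haar p n)"
proof -
  have "(\<lambda>x. J (qpn_norm p n x)) \<in> borel_measurable (haar p n)" using borel_measurable_integrable[OF assms] .
  then show ?thesis by measurable
qed

lemma h_integrable:
  assumes p: "p \<ge> 2" and \<xi>: "\<xi> \<in> qpn p n" and J_int: "integrable (haar p n) (\<lambda>x. J (qpn_norm p n x))"
  shows "integrable (haar p n) (\<lambda>x. chi_p p (qpn_dot p n \<xi> x) * complex_of_real (J (qpn_norm p n x)))"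
proof (rule Bochner_Integration.integrable_bound[OF J_int])
  show "(\<lambda>x. chi_p p (qpn_dot p n \<xi> x) * complex_of_real (J (qpn_norm p n x))) \<in> borel_measurable (haar p n)"
    using chi_measurable[OF p \<xi>] g_meas[OF J_int] by (rule borel_measurable_times)
  show "AE x in haar p n. norm (chi_p p (qpn_dot p n \<xi> x) * complex_of_real (J (qpn_norm p n x)))
          \<le> norm (J (qpn_norm p n x))"
    by (simp add: chi_p_def norm_mult)
qed

lemma Re_h: "Re (chi_p p d * complex_of_real a) = cos (2 * pi * padic_frac p d) * a"
  by (simp add: chi_p_def)

lemma Re_int_le1:
  assumes p: "p \<ge> 2" and n: "n \<ge> 1"
    and J_pos: "\<And>r. r > 0 \<Longrightarrow> J r > 0"
    and J_int: "integrable (haar p n) (\<lambda>x. J (qpn_norm p n x))"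
    and J_norm: "integral\<^sup>L (haar p n) (\<lambda>x. J (qpn_norm p n x)) = 1"
  shows "Re (CLINT x|haar p n. chi_p p (qpn_dot p n \<xi> x) * complex_of_real (J (qpn_norm p n x))) \<le> 1"
proof (cases "integrable (haar p n) (\<lambda>x. chi_p p (qpn_dot p n \<xi> x) * complex_of_real (J (qpn_norm p n x)))")
  case True
  let ?R = "\<lambda>x. Re (chi_p p (qpn_dot p n \<xi> x) * complex_of_real (J (qpn_norm p n x)))"
  have iR: "integrable (haar p n) ?R" using True by (rule integrable_Re)
  have "Re (CLINT x|haar p n. chi_p p (qpn_dot p n \<xi> x) * complex_of_real (J (qpn_norm p n x))) = integral\<^sup>L (haar p n) ?R"
    using integral_Re[OF True] by simp
  also have "\<dots> = 1 - integral\<^sup>L (haar p n) (\<lambda>x. J (qpn_norm p n x) - ?R x)"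
    using Bochner_Integration.integral_diff[OF J_int iR] J_norm by simp
  also have "\<dots> \<le> 1"
  proof -
    have "AE x in haar p n. 0 \<le> J (qpn_norm p n x) - ?R x"
      using AE_nz[OF p n]
    proof (rule AE_mp, intro AE_I2 impI)
      fix x assume x: "x \<in> space (haar p n)" "x \<noteq> qpn_zero"
      have "J (qpn_norm p n x) > 0" using J_pos qpn_norm_pos[OF p n _ x(2)] x(1) by (simp add: space_haar)
      then show "0 \<le> J (qpn_norm p n x) - ?R x" unfolding Re_h
        using mult_right_mono[OF cos_le_one, of "J (qpn_norm p n x)"] by simp
    qed
    then have "0 \<le> integral\<^sup>L (haar p n) (\<lambda>x. J (qpn_norm p n x) - ?R x)" by (rule integral_nonneg_AE)
    then show ?thesis by linarith
  qed
  finally show ?thesis .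
next
  case False then show ?thesis by (simp add: not_integrable_integral_eq)
qed

lemma Jhat_le1:
  assumes p: "p \<ge> 2" and n: "n \<ge> 1"
    and J_pos: "\<And>r. r > 0 \<Longrightarrow> J r > 0"
    and J_int: "integrable (haar p n) (\<lambda>x. J (qpn_norm p n x))"
    and J_norm: "integral\<^sup>L (haar p n) (\<lambda>x. J (qpn_norm p n x)) = 1"
  shows "Jhat p n J r \<le> 1"
  unfolding Jhat_def Let_def using Re_int_le1[OF assms] .


lemma xi_exists:
  assumes p: "p \<ge> 2" and n: "n \<ge> 1"
  shows "\<exists>\<xi>. \<xi> \<in> qpn p n \<and> qpn_norm p n \<xi> = real p powr real_of_int w"
proof -
  define e :: "int \<Rightarrow> nat" where "e = (\<lambda>j. if j = - w then 1 else 0)"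
  define \<xi> where "\<xi> = (\<lambda>i::nat. if i = 0 then e else padic_zero)"
  have ep: "e \<in> padic p" unfolding e_def padic_def using p
    by (auto intro!: exI[of _ "- w"])
  have enz: "e \<noteq> padic_zero" unfolding e_def padic_zero_def by (auto simp: fun_eq_iff)
  have ord: "padic_ord e = - w"
  proof -
    have "e (padic_ord e) \<noteq> 0" using padic_ord_prop[OF ep enz] by simp
    then show ?thesis unfolding e_def by (auto split: if_splits)
  qed
  have xq: "\<xi> \<in> qpn p n" unfolding qpn_def \<xi>_def using ep p n by (auto simp: padic_def padic_zero_def)
  have ne: "padic_norm p e = real p powr real_of_int w" using padic_norm_nz[OF enz] ord by simp
  obtain i where i: "i < n" "qpn_norm p n \<xi> = padic_norm p (\<xi> i)" using qpn_norm_attained[OF n] by blast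
  have ge: "padic_norm p (\<xi> 0) \<le> qpn_norm p n \<xi>" using qpn_norm_ge n by simp
  have "qpn_norm p n \<xi> = real p powr real_of_int w"
  proof (cases "i = 0")
    case True then show ?thesis using i ne unfolding \<xi>_def by simp
  next
    case False
    then have "qpn_norm p n \<xi> = 0" using i unfolding \<xi>_def padic_norm_def by simp
    moreover have "padic_norm p (\<xi> 0) > 0" using ne p unfolding \<xi>_def by simp
    ultimately show ?thesis using ge by simp
  qed
  then show ?thesis using xq by blast
qed

lemma ball_of_norm:
  assumes p: "p \<ge> 2" and y: "y \<in> qpn p n" and le: "qpn_norm p n y \<le> real p powr real_of_int m"
  shows "y \<in> qpn_ball p n qpn_zero (- m)"
  unfolding qpn_ball_def
proof (intro CollectI conjI allI impI y)
  fix i j assume i: "i < n" and j: "j < - m"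
  show "y i j = qpn_zero i j"
  proof (cases "y i = padic_zero")
    case True then show ?thesis by (simp add: qpn_zero_def padic_zero_def)
  next
    case False
    have h: "zb (y i) (padic_ord (y i))" "real p powr (- real_of_int (padic_ord (y i))) \<le> qpn_norm p n y"
      using comp_zb_norm[OF p y i False] by auto
    then have "real p powr (- real_of_int (padic_ord (y i))) \<le> real p powr real_of_int m" using le by simp
    then have "- real_of_int (padic_ord (y i)) \<le> real_of_int m" using p by (subst (asm) powr_le_cancel_iff) auto
    then have "j < padic_ord (y i)" using j by simp
    then show ?thesis using h(1) unfolding zb_def qpn_zero_def padic_zero_def by simp
  qed
qed

lemma key_bound:
  assumes p: "p \<ge> 2" and n: "n \<ge> 1"
    and J_pos: "\<And>r. r > 0 \<Longrightarrow> J r > 0"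
    and J_int: "integrable (haar p n) (\<lambda>x. J (qpn_norm p n x))"
    and J_norm: "integral\<^sup>L (haar p n) (\<lambda>x. J (qpn_norm p n x)) = 1"
    and x: "x \<in> qpn p n" and xk: "qpn_norm p n x = real p powr real_of_int k"
    and \<Phi>: "\<And>y. y \<in> qpn p n \<Longrightarrow> y \<noteq> qpn_zero \<Longrightarrow> qpn_norm p n y \<ge> real p powr real_of_int k \<Longrightarrow>
              ennreal (2 * J (qpn_norm p n y)) \<le> \<Phi> y"
    and int\<Phi>: "(\<integral>\<^sup>+ y. \<Phi> y \<partial>haar p n) \<le> ennreal K" and K: "K \<ge> 0"
  shows "1 - Jhat p n J (real p * qpn_norm p n x powr (-1)) \<le> K"
proof -
  have r0: "real p * qpn_norm p n x powr (-1) = real p powr real_of_int (1 - k)"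
    using p unfolding xk by (simp add: powr_minus_divide powr_diff)
  define \<xi> where "\<xi> = (SOME \<xi>. \<xi> \<in> qpn p n \<and> qpn_norm p n \<xi> = real p * qpn_norm p n x powr (-1))"
  have \<xi>: "\<xi> \<in> qpn p n" "qpn_norm p n \<xi> = real p powr real_of_int (1 - k)"
    using someI_ex[OF xi_exists[OF p n, of "1 - k"]] unfolding \<xi>_def r0 by auto
  let ?h = "\<lambda>y. chi_p p (qpn_dot p n \<xi> y) * complex_of_real (J (qpn_norm p n y))"
  let ?R = "\<lambda>y. Re (?h y)"
  let ?F = "\<lambda>y. J (qpn_norm p n y) - ?R y"
  have hi: "integrable (haar p n) ?h" by (rule h_integrable[OF p \<xi>(1) J_int])
  have iR: "integrable (haar p n) ?R" using hi by (rule integrable_Re)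
  have iF: "integrable (haar p n) ?F" using J_int iR by (rule Bochner_Integration.integrable_diff)
  have "Jhat p n J (real p * qpn_norm p n x powr (-1)) = Re (integral\<^sup>L (haar p n) ?h)"
    unfolding Jhat_def Let_def \<xi>_def[symmetric] ..
  also have "\<dots> = integral\<^sup>L (haar p n) ?R" using integral_Re[OF hi] by simp
  finally have "1 - Jhat p n J (real p * qpn_norm p n x powr (-1)) = integral\<^sup>L (haar p n) ?F"
    using Bochner_Integration.integral_diff[OF J_int iR] J_norm by simp
  also have "\<dots> = enn2real (\<integral>\<^sup>+ y. ennreal (?F y) \<partial>haar p n)"
  proof (rule integral_eq_nn_integral)
    show "?F \<in> borel_measurable (haar p n)" using iF by (rule borel_measurable_integrable)
    show "AE x in haar p n. 0 \<le> ?F x"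
      using AE_nz[OF p n]
    proof (rule AE_mp, intro AE_I2 impI)
      fix y assume y: "y \<in> space (haar p n)" "y \<noteq> qpn_zero"
      have "J (qpn_norm p n y) > 0" using J_pos qpn_norm_pos[OF p n _ y(2)] y(1) by (simp add: space_haar)
      then show "0 \<le> ?F y" unfolding Re_h
        using mult_right_mono[OF cos_le_one, of "J (qpn_norm p n y)"] by simp
    qed
  qed
  also have "\<dots> \<le> K"
  proof (rule enn2real_leI[OF K])
    have "(\<integral>\<^sup>+ y. ennreal (?F y) \<partial>haar p n) \<le> (\<integral>\<^sup>+ y. \<Phi> y \<partial>haar p n)"
    proof (rule nn_integral_mono_AE)
      show "AE y in haar p n. ennreal (?F y) \<le> \<Phi> y"
        using AE_nz[OF p n]
      proof (rule AE_mp, intro AE_I2 impI)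
        fix y assume y: "y \<in> space (haar p n)" "y \<noteq> qpn_zero"
        have yq: "y \<in> qpn p n" using y(1) by (simp add: space_haar)
        have Jp: "J (qpn_norm p n y) > 0" using J_pos qpn_norm_pos[OF p n yq y(2)] by simp
        obtain v where v: "qpn_norm p n y = real p powr real_of_int v" using qpn_norm_pow[OF p n yq y(2)] by blast
        show "ennreal (?F y) \<le> \<Phi> y"
        proof (cases "v \<ge> k")
          case True
          then have "qpn_norm p n y \<ge> real p powr real_of_int k" unfolding v using p by simp
          then have "ennreal (2 * J (qpn_norm p n y)) \<le> \<Phi> y" using \<Phi> yq y(2) by blast
          moreover have "?F y \<le> 2 * J (qpn_norm p n y)" unfolding Re_h
            using mult_right_mono[OF cos_ge_minus_one, of "J (qpn_norm p n y)" "2 * pi * padic_frac p (qpn_dot p n \<xi> y)"] Jp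
            by (simp add: algebra_simps)
          ultimately show ?thesis using ennreal_leI order_trans by blast
        next
          case False
          have "qpn_norm p n \<xi> * qpn_norm p n y = real p powr real_of_int (1 - k + v)"
            unfolding \<xi>(2) v by (simp add: powr_add[symmetric])
          also have "\<dots> \<le> real p powr 0" using False p by (intro powr_mono) auto
          finally have "chi_p p (qpn_dot p n \<xi> y) = 1" using chi_one[OF p \<xi>(1) yq] p by simp
          then have F0: "?F y = 0" by simp
          have "ennreal (?F y) = 0" by (simp only: F0 ennreal_0)
          then show ?thesis by (metis zero_le)
        qed
      qed
    qed
    then show "(\<integral>\<^sup>+ y. ennreal (?F y) \<partial>haar p n) \<le> ennreal K" using int\<Phi> by (rule order_trans)
  qed
  finally show ?thesis .
qed


lemma exp_diff_le:
  fixes a b t :: real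
  assumes a: "a \<le> 1" and b: "b \<le> 1" and t: "t \<ge> 0"
  shows "exp ((a - 1) * t) - exp ((b - 1) * t) \<le> t * (1 - b)"
proof -
  define u where "u = (a - 1) * t"
  define w where "w = (b - 1) * t"
  have u0: "u \<le> 0" unfolding u_def using a t by (intro mult_nonpos_nonneg) auto
  have uw: "u - w \<le> t * (1 - b)" unfolding u_def w_def using mult_right_mono[OF a t] by (simp add: algebra_simps)
  have D0: "t * (1 - b) \<ge> 0" using b t by simp
  show ?thesis
  proof (cases "u \<le> w")
    case True
    then have "exp u - exp w \<le> 0" by simp
    then show ?thesis using D0 unfolding u_def[symmetric] w_def[symmetric] by linarith
  next
    case False
    have "exp u - exp w = exp u * (1 - exp (w - u))" by (simp add: algebra_simps exp_diff)
    also have "\<dots> \<le> 1 * (1 - exp (w - u))"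
      using False u0 by (intro mult_right_mono) auto
    also have "\<dots> = 1 - exp (w - u)" by simp
    also have "\<dots> \<le> u - w" using exp_ge_add_one_self[of "w - u"] by linarith
    finally show ?thesis using uw unfolding u_def[symmetric] w_def[symmetric] by simp
  qed
qed

lemma Z_le:
  fixes q t b :: real and a :: "nat \<Rightarrow> real"
  assumes q: "0 \<le> q" "q < 1" and a: "\<And>j. a j \<le> 1" and b: "b \<le> 1" and t: "t \<ge> 0"
  shows "(1 - q) * (\<Sum>j. q ^ j * exp ((a j - 1) * t)) - exp ((b - 1) * t) \<le> t * (1 - b)"
proof -
  define D where "D = t * (1 - b)"
  define eb where "eb = exp ((b - 1) * t)"
  have e1: "exp ((a j - 1) * t) \<le> 1" for j using a[of j] t by (simp add: mult_nonpos_nonneg)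
  have s1: "summable (\<lambda>j. q ^ j * exp ((a j - 1) * t))"
    by (rule summable_comparison_test[OF _ summable_geometric[of q]])
       (use q e1 in \<open>auto intro!: exI[of _ 0] mult_left_le\<close>)
  have s2: "summable (\<lambda>j. (eb + D) * q ^ j)" using q by (intro summable_mult summable_geometric) auto
  have "(\<Sum>j. q ^ j * exp ((a j - 1) * t)) \<le> (\<Sum>j. (eb + D) * q ^ j)"
  proof (rule suminf_le[OF _ s1 s2])
    fix j
    have "exp ((a j - 1) * t) \<le> eb + D" using exp_diff_le[OF a b t, of j] unfolding eb_def D_def by simp
    then show "q ^ j * exp ((a j - 1) * t) \<le> (eb + D) * q ^ j"
      using q mult_left_mono[of "exp ((a j - 1) * t)" "eb + D" "q ^ j"] by (simp add: mult.commute)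
  qed
  also have "\<dots> = (eb + D) / (1 - q)" using q by (simp add: suminf_mult suminf_geometric)
  finally have "(1 - q) * (\<Sum>j. q ^ j * exp ((a j - 1) * t)) \<le> eb + D"
    using q by (simp add: field_simps)
  then show ?thesis unfolding eb_def D_def by simp
qed

lemma Z_bound:
  assumes p: "p \<ge> 2" and n: "n \<ge> 1"
    and J_pos: "\<And>r. r > 0 \<Longrightarrow> J r > 0"
    and J_int: "integrable (haar p n) (\<lambda>x. J (qpn_norm p n x))"
    and J_norm: "integral\<^sup>L (haar p n) (\<lambda>x. J (qpn_norm p n x)) = 1"
    and t: "t \<ge> 0" and x: "x \<in> qpn p n"
  shows "Ztilde p n J x t \<le> qpn_norm p n x powr (- real n) * (t * (1 - Jhat p n J (real p * qpn_norm p n x powr (-1))))"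
proof -
  define q where "q = real p powr (- real n)"
  have q: "0 \<le> q" "q < 1" unfolding q_def using p n by (auto intro!: powr_less_one)
  have pq: "real p powr (- real n * real j) = q ^ j" for j
    unfolding q_def using p by (simp add: powr_realpow[symmetric] powr_powr)
  have le1: "\<And>r. Jhat p n J r \<le> 1" using Jhat_le1[OF p n J_pos J_int J_norm] .
  have "Ztilde p n J x t = qpn_norm p n x powr (- real n) *
       ((1 - q) * (\<Sum>j. q ^ j * exp ((Jhat p n J (real p powr (- real j) * qpn_norm p n x powr (-1)) - 1) * t))
        - exp ((Jhat p n J (real p * qpn_norm p n x powr (-1)) - 1) * t))"
    unfolding Ztilde_def pq q_def ..
  also have "\<dots> \<le> qpn_norm p n x powr (- real n) * (t * (1 - Jhat p n J (real p * qpn_norm p n x powr (-1))))"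
    by (intro mult_left_mono Z_le q le1 t) simp
  finally show ?thesis .
qed


lemma part1:
  assumes p: "p \<ge> 2" and n: "n \<ge> 1"
    and J_pos: "\<And>r. r > 0 \<Longrightarrow> J r > 0"
    and J_int: "integrable (haar p n) (\<lambda>x. J (qpn_norm p n x))"
    and J_norm: "integral\<^sup>L (haar p n) (\<lambda>x. J (qpn_norm p n x)) = 1"
    and x: "x \<in> qpn p n" "x \<noteq> qpn_zero" and t: "t > 0"
  shows "Ztilde p n J x t \<le> 2 * t * qpn_norm p n x powr (- real n)"
proof -
  obtain k where k: "qpn_norm p n x = real p powr real_of_int k" using qpn_norm_pow[OF p n x] by blast
  have int2: "(\<integral>\<^sup>+ y. ennreal (2 * J (qpn_norm p n y)) \<partial>haar p n) = ennreal 2"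
  proof -
    have "(\<integral>\<^sup>+ y. ennreal (2 * J (qpn_norm p n y)) \<partial>haar p n) =
          ennreal (integral\<^sup>L (haar p n) (\<lambda>y. 2 * J (qpn_norm p n y)))"
    proof (rule nn_integral_eq_integral)
      show "integrable (haar p n) (\<lambda>y. 2 * J (qpn_norm p n y))" using J_int by (rule integrable_mult_right)
      show "AE y in haar p n. 0 \<le> 2 * J (qpn_norm p n y)"
        using AE_nz[OF p n]
      proof (rule AE_mp, intro AE_I2 impI)
        fix y assume y: "y \<in> space (haar p n)" "y \<noteq> qpn_zero"
        have "J (qpn_norm p n y) > 0" using J_pos qpn_norm_pos[OF p n _ y(2)] y(1) by (simp add: space_haar)
        then show "0 \<le> 2 * J (qpn_norm p n y)" by simp
      qed
    qed
    then show ?thesis using J_norm by (simp add: integral_mult_right_zero)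
  qed
  have b: "1 - Jhat p n J (real p * qpn_norm p n x powr (-1)) \<le> 2"
    by (rule key_bound[OF p n J_pos J_int J_norm x(1) k, where \<Phi>="\<lambda>y. ennreal (2 * J (qpn_norm p n y))"])
       (use int2 in auto)
  have "Ztilde p n J x t \<le> qpn_norm p n x powr (- real n) * (t * (1 - Jhat p n J (real p * qpn_norm p n x powr (-1))))"
    using Z_bound[OF p n J_pos J_int J_norm _ x(1)] t by simp
  also have "\<dots> \<le> qpn_norm p n x powr (- real n) * (t * 2)"
    using b t by (intro mult_left_mono) auto
  finally show ?thesis by (simp add: algebra_simps)
qed

lemma b_summable:
  fixes P e c :: real
  assumes P: "P \<ge> 2" and c: "c > 0"
  shows "summable (\<lambda>i::nat. P powr (real i * e) * exp (- c * (P powr real i - 1)))"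
proof -
  define b where "b = (\<lambda>i::nat. P powr (real i * e) * exp (- c * (P powr real i - 1)))"
  have bnn: "b i \<ge> 0" for i unfolding b_def by simp
  obtain N :: nat where N: "ln (2 * P powr e) / c \<le> real N" using real_arch_simple by blast
  have "summable b"
  proof (rule summable_ratio_test[of "1/2" N])
    fix i assume i: "N \<le> i"
    have Pi: "P powr real (Suc i) - P powr real i = P powr real i * (P - 1)"
      using P by (simp add: powr_add algebra_simps)
    have "real i < 2 ^ i" using less_exp[of i] by (metis of_nat_less_iff of_nat_numeral of_nat_power)
    also have "(2::real) ^ i \<le> P ^ i" using P by (intro power_mono) auto
    also have "P ^ i = P powr real i" using P by (simp add: powr_realpow)
    finally have ii: "real i \<le> P powr real i" by simp
    have "P powr real i * 1 \<le> P powr real i * (P - 1)"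
      using P by (intro mult_left_mono) auto
    then have "real i \<le> P powr real i * (P - 1)" using ii by linarith
    then have d: "real i \<le> P powr real (Suc i) - P powr real i" using Pi by simp
    have "ln (2 * P powr e) \<le> c * real i"
      using N i c by (simp add: divide_le_eq mult.commute order_trans mult_left_mono)
    also have "\<dots> \<le> c * (P powr real (Suc i) - P powr real i)" using d c by simp
    finally have l: "ln (2 * P powr e) \<le> c * (P powr real (Suc i) - P powr real i)" .
    have "exp (- c * (P powr real (Suc i) - P powr real i)) \<le> exp (- ln (2 * P powr e))"
      using l by simp
    also have "\<dots> = 1 / (2 * P powr e)" using P by (simp add: exp_minus inverse_eq_divide)
    finally have ex: "P powr e * exp (- c * (P powr real (Suc i) - P powr real i)) \<le> 1/2"
      using P by (simp add: field_simps)
    have "b (Suc i) = (P powr e * exp (- c * (P powr real (Suc i) - P powr real i))) * b i"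
      unfolding b_def using P by (simp add: powr_add[symmetric] exp_add[symmetric] algebra_simps)
    also have "\<dots> \<le> 1/2 * b i" using ex bnn[of i] by (intro mult_right_mono) auto
    finally show "norm (b (Suc i)) \<le> 1/2 * norm (b i)" using bnn[of i] bnn[of "Suc i"] by simp
  qed simp
  then show ?thesis unfolding b_def .
qed

lemma term_ineq:
  fixes P R a C1 B \<gamma> nr :: real and k :: int and i :: nat
  assumes P: "P \<ge> 2" and R: "R = P powr real_of_int k" and a: "0 < a" "a \<le> R"
    and C1: "C1 > 0" and B: "B > 0"
  shows "2 * B * P powr (real_of_int (k + int i) * \<gamma>) * exp (- C1 * P powr real_of_int (k + int i)) *
           P powr (nr * real_of_int (k + int i))
         \<le> 2 * B * R powr (nr + \<gamma>) * exp (- C1 * R) *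
           (P powr (real i * (nr + \<gamma>)) * exp (- C1 * a * (P powr real i - 1)))"
proof -
  have pw: "P powr (real_of_int (k + int i) * \<gamma>) * P powr (nr * real_of_int (k + int i)) =
            R powr (nr + \<gamma>) * P powr (real i * (nr + \<gamma>))"
    unfolding R using P by (simp add: powr_powr powr_add[symmetric] algebra_simps)
  have Pi1: "P powr real i \<ge> 1" using P by (intro ge_one_powr_ge_zero) auto
  have PkI: "P powr real_of_int (k + int i) = R * P powr real i"
    unfolding R using P by (simp add: powr_add[symmetric])
  have "a * (P powr real i - 1) \<le> R * (P powr real i - 1)" using a Pi1 by (intro mult_right_mono) auto
  then have "C1 * (R + a * (P powr real i - 1)) \<le> C1 * (R * P powr real i)"
    using C1 by (intro mult_left_mono) (auto simp: algebra_simps)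
  then have "C1 * R + C1 * a * (P powr real i - 1) \<le> C1 * P powr real_of_int (k + int i)"
    unfolding PkI by (simp add: algebra_simps)
  then have ex: "exp (- C1 * P powr real_of_int (k + int i)) \<le> exp (- C1 * R) * exp (- C1 * a * (P powr real i - 1))"
    by (simp add: exp_add[symmetric])
  have "2 * B * P powr (real_of_int (k + int i) * \<gamma>) * exp (- C1 * P powr real_of_int (k + int i)) *
           P powr (nr * real_of_int (k + int i))
        = (2 * B * R powr (nr + \<gamma>) * P powr (real i * (nr + \<gamma>))) * exp (- C1 * P powr real_of_int (k + int i))"
    using pw by (simp add: algebra_simps)
  also have "\<dots> \<le> (2 * B * R powr (nr + \<gamma>) * P powr (real i * (nr + \<gamma>))) * (exp (- C1 * R) * exp (- C1 * a * (P powr real i - 1)))"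
    using ex B by (intro mult_left_mono) auto
  finally show ?thesis by (simp add: algebra_simps)
qed


lemma part2:
  fixes p n :: nat and J :: "real \<Rightarrow> real" and B C\<^sub>1 \<gamma> :: real and l :: int
  assumes p: "p \<ge> 2" and n: "n \<ge> 1"
    and J_pos: "\<And>r. r > 0 \<Longrightarrow> J r > 0"
    and J_int: "integrable (haar p n) (\<lambda>x. J (qpn_norm p n x))"
    and J_norm: "integral\<^sup>L (haar p n) (\<lambda>x. J (qpn_norm p n x)) = 1"
    and B: "B > 0" and C1: "C\<^sub>1 > 0"
    and upper: "\<And>x. x \<in> qpn p n \<Longrightarrow> x \<noteq> qpn_zero \<Longrightarrow>
        J (qpn_norm p n x) \<le> B * qpn_norm p n x powr \<gamma> * exp (- C\<^sub>1 * qpn_norm p n x)"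
  shows "\<exists>C\<^sub>0 > 0. \<forall>x \<in> qpn p n. \<forall>t > 0.
               qpn_norm p n x > real p powr real_of_int l \<longrightarrow>
               Ztilde p n J x t \<le> C\<^sub>0 * t * qpn_norm p n x powr \<gamma> * exp (- C\<^sub>1 * qpn_norm p n x)"
proof -
  define P where "P = real p"
  have P: "P \<ge> 2" unfolding P_def using p by simp
  define q where "q = P powr (- real n)"
  have q: "0 \<le> q" "q < 1" unfolding q_def using P n by (auto intro!: powr_less_one)
  define a where "a = P powr real_of_int l"
  have a: "a > 0" unfolding a_def using P by simp
  define e where "e = real n + \<gamma>"
  define b where "b = (\<lambda>i::nat. P powr (real i * e) * exp (- (C\<^sub>1 * a) * (P powr real i - 1)))"
  have bs: "summable b" unfolding b_def using b_summable[OF P, of "C\<^sub>1 * a" e] C1 a by simp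
  have bnn: "b i \<ge> 0" for i unfolding b_def by simp
  define S where "S = suminf b"
  have S1: "S \<ge> 1"
  proof -
    have "sum b {0} \<le> suminf b" using bs bnn by (intro sum_le_suminf) auto
    moreover have "b 0 = 1" unfolding b_def using P by simp
    ultimately show ?thesis unfolding S_def by simp
  qed
  define C0 where "C0 = 2 * B * S / (1 - q)"
  have C0: "C0 > 0" unfolding C0_def using B S1 q by simp
  have main: "Ztilde p n J x t \<le> C0 * t * qpn_norm p n x powr \<gamma> * exp (- C\<^sub>1 * qpn_norm p n x)"
    if x: "x \<in> qpn p n" and t: "t > 0" and xl: "qpn_norm p n x > real p powr real_of_int l" for x t
  proof -
    define R where "R = qpn_norm p n x"
    have xnz: "x \<noteq> qpn_zero" using xl qpn_zero_norm[OF n] p by auto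
    obtain k where k: "R = P powr real_of_int k" using qpn_norm_pow[OF p n x xnz] unfolding R_def P_def by blast
    have aR: "a \<le> R" using xl unfolding R_def a_def P_def by simp
    have Rpos: "R > 0" using k P by simp
    define K1 where "K1 = 2 * B / (1 - q) * R powr e * exp (- C\<^sub>1 * R)"
    have K1: "K1 \<ge> 0" unfolding K1_def using B q by simp
    define c where "c = (\<lambda>i::nat. 2 * B * P powr (real_of_int (k + int i) * \<gamma>) * exp (- C\<^sub>1 * P powr real_of_int (k + int i)))"
    have cnn: "c i \<ge> 0" for i unfolding c_def using B by simp
    define Bk where "Bk = (\<lambda>i::nat. qpn_ball p n qpn_zero (- (k + int i)))"
    have Bks: "Bk i \<in> sets (haar p n)" for i unfolding Bk_def using p by (intro ball_sets qpn_zero_in) auto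
    define \<Phi> where "\<Phi> = (\<lambda>y. \<Sum>i. ennreal (c i) * indicator (Bk i) y)"
    have \<Phi>1: "ennreal (2 * J (qpn_norm p n y)) \<le> \<Phi> y"
      if y: "y \<in> qpn p n" "y \<noteq> qpn_zero" "qpn_norm p n y \<ge> real p powr real_of_int k" for y
    proof -
      obtain v where v: "qpn_norm p n y = P powr real_of_int v" using qpn_norm_pow[OF p n y(1,2)] unfolding P_def by blast
      have vk: "k \<le> v" using y(3) P unfolding v P_def[symmetric] by simp
      define i0 where "i0 = nat (v - k)"
      have ki: "k + int i0 = v" unfolding i0_def using vk by simp
      have "2 * J (qpn_norm p n y) \<le> 2 * (B * qpn_norm p n y powr \<gamma> * exp (- C\<^sub>1 * qpn_norm p n y))"
        using upper[OF y(1,2)] by simp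
      also have "\<dots> = c i0" unfolding c_def ki v using P by (simp add: powr_powr)
      finally have le: "ennreal (2 * J (qpn_norm p n y)) \<le> ennreal (c i0)" by (rule ennreal_leI)
      have yB: "y \<in> Bk i0" unfolding Bk_def ki using ball_of_norm[OF p y(1), of v] v unfolding P_def by simp
      have "ennreal (c i0) = (\<Sum>i\<in>{i0}. ennreal (c i) * indicator (Bk i) y)" using yB by simp
      also have "\<dots> \<le> \<Phi> y" unfolding \<Phi>_def by (intro sum_le_suminf) auto
      finally show ?thesis using le by simp
    qed
    have "(\<integral>\<^sup>+ y. \<Phi> y \<partial>haar p n) = (\<Sum>i. \<integral>\<^sup>+ y. ennreal (c i) * indicator (Bk i) y \<partial>haar p n)"
      unfolding \<Phi>_def
      by (rule nn_integral_suminf) (intro borel_measurable_times_ennreal borel_measurable_const borel_measurable_indicator Bks)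
    also have "\<dots> = (\<Sum>i. ennreal (c i) * emeasure (haar p n) (Bk i))"
      using nn_integral_cmult_indicator[OF Bks] by simp
    also have "\<dots> \<le> (\<Sum>i. ennreal (K1 * b i))"
    proof (intro suminf_le summableI)
      fix i
      have em: "emeasure (haar p n) (Bk i) \<le> ennreal (P powr (real n * real_of_int (k + int i)) / (1 - q))"
      proof -
        have eq: "- real n * real_of_int (- (k + int i)) = real n * real_of_int (k + int i)" by (simp add: algebra_simps)
        show ?thesis
          using emeasure_ball_le[OF p n qpn_zero_in, of "- (k + int i)"] p unfolding Bk_def q_def P_def eq by simp
      qed
      have "ennreal (c i) * emeasure (haar p n) (Bk i) \<le> ennreal (c i) * ennreal (P powr (real n * real_of_int (k + int i)) / (1 - q))"
        using em by (rule mult_left_mono) simp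
      also have "\<dots> = ennreal (c i * (P powr (real n * real_of_int (k + int i)) / (1 - q)))"
        using ennreal_mult'[OF cnn[of i], of "P powr (real n * real_of_int (k + int i)) / (1 - q)"] by simp
      also have "\<dots> \<le> ennreal (K1 * b i)"
      proof (rule ennreal_leI)
        have "c i * P powr (real n * real_of_int (k + int i)) \<le>
              2 * B * R powr (real n + \<gamma>) * exp (- C\<^sub>1 * R) * (P powr (real i * (real n + \<gamma>)) * exp (- C\<^sub>1 * a * (P powr real i - 1)))"
          unfolding c_def by (rule term_ineq[OF P k a aR C1 B])
        then have "c i * P powr (real n * real_of_int (k + int i)) / (1 - q) \<le>
              2 * B * R powr (real n + \<gamma>) * exp (- C\<^sub>1 * R) * (P powr (real i * (real n + \<gamma>)) * exp (- C\<^sub>1 * a * (P powr real i - 1))) / (1 - q)"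
          using q by (intro divide_right_mono) auto
        then show "c i * (P powr (real n * real_of_int (k + int i)) / (1 - q)) \<le> K1 * b i"
          unfolding K1_def b_def e_def by (simp add: algebra_simps)
      qed
      finally show "ennreal (c i) * emeasure (haar p n) (Bk i) \<le> ennreal (K1 * b i)" .
    qed
    also have "\<dots> = ennreal (\<Sum>i. K1 * b i)"
      using bs K1 bnn by (intro suminf_ennreal2 summable_mult) auto
    also have "(\<Sum>i. K1 * b i) = K1 * S" unfolding S_def using bs by (rule suminf_mult)
    finally have int\<Phi>: "(\<integral>\<^sup>+ y. \<Phi> y \<partial>haar p n) \<le> ennreal (K1 * S)" .
    have kb: "1 - Jhat p n J (real p * qpn_norm p n x powr (-1)) \<le> K1 * S"
      using key_bound[OF p n J_pos J_int J_norm x, of k \<Phi> "K1 * S"] k \<Phi>1 int\<Phi> K1 S1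
      unfolding R_def P_def by auto
    have "Ztilde p n J x t \<le> R powr (- real n) * (t * (1 - Jhat p n J (real p * qpn_norm p n x powr (-1))))"
      using Z_bound[OF p n J_pos J_int J_norm _ x] t unfolding R_def by simp
    also have "\<dots> \<le> R powr (- real n) * (t * (K1 * S))"
      using kb t by (intro mult_left_mono) auto
    also have "\<dots> = C0 * t * R powr \<gamma> * exp (- C\<^sub>1 * R)"
    proof -
      have "R powr (- real n) * R powr e = R powr \<gamma>" unfolding e_def using Rpos by (simp add: powr_add[symmetric])
      then show ?thesis unfolding K1_def C0_def by (simp add: algebra_simps)
    qed
    finally show ?thesis unfolding R_def .
  qed
  show ?thesis using C0 main by blast
qed


theorem proposition2:
  fixes p n :: nat and J :: "real \<Rightarrow> real" and A B C\<^sub>1 \<gamma> :: real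
  assumes "prime p" and "n \<ge> 1"
    and J_cont: "continuous_on {0<..} J"
    and J_pos: "\<And>r. r > 0 \<Longrightarrow> J r > 0"
    and J_int: "integrable (haar p n) (\<lambda>x. J (qpn_norm p n x))"
    and J_norm: "integral\<^sup>L (haar p n) (\<lambda>x. J (qpn_norm p n x)) = 1"
    and constants: "A > 0" "B > 0" "C\<^sub>1 > 0" "\<gamma> > - real n"
    and exp_type: "\<And>x. x \<in> qpn p n \<Longrightarrow> x \<noteq> qpn_zero \<Longrightarrow>
        A * qpn_norm p n x powr \<gamma> * exp (- C\<^sub>1 * qpn_norm p n x) \<le> J (qpn_norm p n x) \<and>
        J (qpn_norm p n x) \<le> B * qpn_norm p n x powr \<gamma> * exp (- C\<^sub>1 * qpn_norm p n x)"
  shows "(\<forall>x \<in> qpn p n. \<forall>t > 0. x \<noteq> qpn_zero \<longrightarrow>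
            Ztilde p n J x t \<le> 2 * t * qpn_norm p n x powr (- real n))
       \<and> (\<gamma> < 0 \<longrightarrow>
            (\<forall>l :: int. \<exists>C\<^sub>0 > 0. \<forall>x \<in> qpn p n. \<forall>t > 0.
               qpn_norm p n x > real p powr real_of_int l \<longrightarrow>
               Ztilde p n J x t \<le> C\<^sub>0 * t * qpn_norm p n x powr \<gamma> * exp (- C\<^sub>1 * qpn_norm p n x)))"
  proof -
  have p: "p \<ge> 2" using assms(1) by (rule prime_ge_2_nat)
  have upper: "\<And>x. x \<in> qpn p n \<Longrightarrow> x \<noteq> qpn_zero \<Longrightarrow>
        J (qpn_norm p n x) \<le> B * qpn_norm p n x powr \<gamma> * exp (- C\<^sub>1 * qpn_norm p n x)"
    using exp_type by blast
  show ?thesis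
  proof (intro conjI impI)
    show "\<forall>x \<in> qpn p n. \<forall>t > 0. x \<noteq> qpn_zero \<longrightarrow>
            Ztilde p n J x t \<le> 2 * t * qpn_norm p n x powr (- real n)"
      using part1[OF p assms(2) J_pos J_int J_norm] by blast
    show "\<forall>l :: int. \<exists>C\<^sub>0 > 0. \<forall>x \<in> qpn p n. \<forall>t > 0.
               qpn_norm p n x > real p powr real_of_int l \<longrightarrow>
               Ztilde p n J x t \<le> C\<^sub>0 * t * qpn_norm p n x powr \<gamma> * exp (- C\<^sub>1 * qpn_norm p n x)"
      using part2[OF p assms(2) J_pos J_int J_norm constants(2) constants(3) upper] by blast
  qed
qed

end
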